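(* Let $X,Y$ be Hilbert spaces, $A:X\to Y$ a bounded linear operator, $x^\dagger,x^*\in X$ and $y\in Y$. Let $\lambda>0$ with $\lambda\in\sigma(AA^* )$ and set $\delta:=\lambda$. Then there exists $y^\delta\in Y$ with $\|y^\delta-y\|=\delta$ such that for every $\alpha>0$, $$\|\hat x_\alpha^\delta-x^\dagger\|^2\ \ge\ \frac{\delta}{2(\alpha/\delta+3/2)^2},$$ where $\hat x_\alpha^\delta:=x^\dagger+(\alpha I+A^*A)^{-1}\big(\alpha(x^*-x^\dagger)+A^*(y^\delta-y)\big)$.
   Context: $\sigma(AA^* )$ denotes the spectrum of the self-adjoint operator $AA^*$. The element $\hat x_\alpha^\delta$ is the unique minimizer of $\|Ax-(Ax^\dagger+y^\delta-y)\|^2+\alpha\|x-x^*\|^2$ over $X$. *)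

theory Defs
  imports "HOL-Analysis.Analysis"
begin

definition op_spectrum :: "('b::{real_inner,complete_space} \<Rightarrow> 'b) \<Rightarrow> real set" where
  "op_spectrum T = {mu. \<not> (\<exists>S. bounded_linear S \<and>
       (\<forall>x. S (mu *\<^sub>R x - T x) = x) \<and> (\<forall>x. mu *\<^sub>R S x - T (S x) = x))}"

definition xhat :: "('a::{real_inner,complete_space} \<Rightarrow> 'b::{real_inner,complete_space})
     \<Rightarrow> real \<Rightarrow> 'a \<Rightarrow> 'a \<Rightarrow> 'b \<Rightarrow> 'b \<Rightarrow> 'a" where
  "xhat A alpha xdag xstar y ydelta =
     xdag + inv (\<lambda>x. alpha *\<^sub>R x + adjoint A (A x))
              (alpha *\<^sub>R (xstar - xdag) + adjoint A (ydelta - y))"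

end

theory Submission
  imports Defs
begin

lemma coercive_solve:
  fixes S :: "'a::{real_inner,complete_space} \<Rightarrow> 'a" and g :: "'a \<Rightarrow> real"
  assumes S: "bounded_linear S" and sym: "\<And>x y. S x \<bullet> y = x \<bullet> S y"
    and c: "c > 0" and coer: "\<And>x. c * (norm x)\<^sup>2 \<le> S x \<bullet> x"
    and g: "bounded_linear g"
  shows "\<exists>z. \<forall>h. S z \<bullet> h = g h"
proof -
  interpret S: bounded_linear S by fact
  interpret g: bounded_linear g by fact
  define J where "J x = (S x \<bullet> x) / 2 - g x" for x
  obtain K where K: "K > 0" "\<And>x. norm (g x) \<le> norm x * K" using g.pos_bounded by blast
  have Jlow: "- (K\<^sup>2 / (2*c)) \<le> J x" for x
  proof -
    have "g x \<le> norm x * K" using K(2)[of x] by auto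
    moreover have "0 \<le> (c * norm x - K)\<^sup>2" by simp
    hence "0 \<le> c*c*(norm x)\<^sup>2 - 2*c*K*norm x + K\<^sup>2" by (simp add: power2_eq_square algebra_simps)
    hence "- (K\<^sup>2 / (2*c)) \<le> c*(norm x)\<^sup>2/2 - K * norm x" using c
      by (simp add: field_simps power2_eq_square)
    ultimately show ?thesis using coer[of x] unfolding J_def by (simp add: algebra_simps)
  qed
  define m where "m = Inf (range J)"
  have bdd: "bdd_below (range J)" by (rule bdd_belowI2[where m="- (K\<^sup>2 / (2*c))"]) (rule Jlow)
  have mle: "m \<le> J x" for x unfolding m_def using bdd by (simp add: cInf_lower)
  have "\<exists>x. J x < m + 1 / real (Suc n)" for n
  proof -
    have "Inf (range J) < m + 1 / real (Suc n)" unfolding m_def by simp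
    then obtain y where "y \<in> range J" "y < m + 1 / real (Suc n)"
      using cInf_lessD[of "range J"] by blast
    thus ?thesis by auto
  qed
  then obtain a where a: "\<And>n. J (a n) < m + 1 / real (Suc n)" by metis
  have par: "c/4 * (norm (x - y))\<^sup>2 \<le> J x + J y - 2 * J (scaleR (1/2) (x + y))" for x y
  proof -
    have e1: "J x + J y - 2 * J (scaleR (1/2) (x + y)) = (S (x - y) \<bullet> (x - y)) / 4"
      unfolding J_def by (simp add: S.diff S.add S.scaleR g.add g.scaleR inner_diff_left inner_diff_right
          inner_add_left inner_add_right sym[of y x] algebra_simps)
    show ?thesis unfolding e1 using coer[of "x - y"] by simp
  qed
  have dist_bound: "c/4 * (norm (a n - a k))\<^sup>2 \<le> 1 / real (Suc n) + 1 / real (Suc k)" for n k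
    using par[of "a n" "a k"] a[of n] a[of k] mle[of "scaleR (1/2) (a n + a k)"] by linarith
  have "Cauchy a"
  proof (rule metric_CauchyI)
    fix e :: real assume e: "e > 0"
    obtain N where N: "inverse (real (Suc N)) < c * e\<^sup>2 / 8" using reals_Archimedean c e
      by (metis divide_pos_pos zero_less_numeral zero_less_power mult_pos_pos)
    show "\<exists>M. \<forall>m\<ge>M. \<forall>n\<ge>M. dist (a m) (a n) < e"
    proof (intro exI allI impI)
      fix n k assume nk: "N \<le> n" "N \<le> k"
      have "1 / real (Suc n) \<le> inverse (real (Suc N))" using nk by (simp add: field_simps)
      moreover have "1 / real (Suc k) \<le> inverse (real (Suc N))" using nk by (simp add: field_simps)
      ultimately have "c/4 * (norm (a n - a k))\<^sup>2 < c * e\<^sup>2 / 4"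
        using dist_bound[of n k] N by linarith
      hence "(norm (a n - a k))\<^sup>2 < e\<^sup>2" using c by simp
      hence "norm (a n - a k) < e" using e by (smt (verit) power_mono norm_ge_zero)
      thus "dist (a n) (a k) < e" by (simp add: dist_norm)
    qed
  qed
  then obtain z where z: "a \<longlonglongrightarrow> z" using convergent_eq_Cauchy by blast
  have "(\<lambda>n. J (a n)) \<longlonglongrightarrow> J z" unfolding J_def
    by (intro tendsto_intros S.tendsto g.tendsto z) auto
  moreover have "(\<lambda>n. J (a n)) \<longlonglongrightarrow> m"
  proof (rule real_tendsto_sandwich[where f="\<lambda>n. m" and h="\<lambda>n. m + 1 / real (Suc n)"])
    show "\<forall>\<^sub>F n in sequentially. m \<le> J (a n)" using mle by simp
    show "\<forall>\<^sub>F n in sequentially. J (a n) \<le> m + 1 / real (Suc n)" using a by (simp add: less_imp_le)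
    show "(\<lambda>n. m) \<longlonglongrightarrow> m" by simp
    show "(\<lambda>n. m + 1 / real (Suc n)) \<longlonglongrightarrow> m" using LIMSEQ_inverse_real_of_nat_add[of m] by (simp add: divide_inverse)
  qed
  ultimately have Jz: "J z = m" using LIMSEQ_unique by blast
  show ?thesis
  proof (intro exI allI)
    fix h
    define p where "p = S z \<bullet> h - g h"
    define Q where "Q = S h \<bullet> h"
    have Q0: "Q \<ge> 0" unfolding Q_def using coer[of h] c by (smt (verit) mult_nonneg_nonneg zero_le_power2)
    have var: "J (z + t *\<^sub>R h) - J z = t * p + t\<^sup>2 * Q / 2" for t
      unfolding J_def p_def Q_def by (simp add: S.add S.scaleR g.add g.scaleR inner_add_left inner_add_right
          sym[of h z] inner_commute[of h "S z"] power2_eq_square algebra_simps)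
    have tp: "0 \<le> t * p + t\<^sup>2 * Q / 2" for t using var[of t] mle[of "z + t *\<^sub>R h"] Jz by linarith
    define s where "s = 1 / (Q + 1)"
    have s0: "s > 0" using Q0 unfolding s_def by simp
    have sQ: "s * Q / 2 - 1 < 0" using Q0 unfolding s_def by (simp add: field_simps)
    from tp[of "- p * s"]
    have "0 \<le> s * p\<^sup>2 * (s * Q / 2 - 1)" by (simp add: power2_eq_square algebra_simps)
    moreover have "s * p\<^sup>2 \<ge> 0" using s0 by simp
    ultimately have "s * p\<^sup>2 \<le> 0" using sQ by (smt (verit) mult_pos_neg)
    hence "p\<^sup>2 \<le> 0" using s0 by (smt (verit) mult_pos_pos zero_le_power2)
    hence "p = 0" by simp
    thus "S z \<bullet> h = g h" unfolding p_def by simp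
  qed
qed

lemma coercive_surj:
  fixes S :: "'a::{real_inner,complete_space} \<Rightarrow> 'a"
  assumes S: "bounded_linear S" and sym: "\<And>x y. S x \<bullet> y = x \<bullet> S y"
    and c: "c > 0" and coer: "\<And>x. c * (norm x)\<^sup>2 \<le> S x \<bullet> x"
  shows "surj S"
proof -
  have "\<exists>z. S z = w" for w
  proof -
    obtain z where z: "\<forall>h. S z \<bullet> h = w \<bullet> h"
      using coercive_solve[OF S sym c coer, of "\<lambda>h. w \<bullet> h"] bounded_linear_inner_right by blast
    hence "S z = w" using vector_eq_rdot by blast
    thus ?thesis by blast
  qed
  thus ?thesis by (metis surjI)
qed

lemma adj:
  fixes A :: "'a::{real_inner,complete_space} \<Rightarrow> 'b::real_inner"
  assumes A: "bounded_linear A"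
  shows "A x \<bullet> y = x \<bullet> adjoint A y"
proof -
  have "\<exists>z. \<forall>x. A x \<bullet> y = x \<bullet> z" for y
  proof -
    have bl: "bounded_linear (\<lambda>x. A x \<bullet> y)"
      using bounded_linear_compose[OF bounded_linear_inner_left A] .
    have "\<exists>z. \<forall>h. z \<bullet> h = A h \<bullet> y"
      by (rule coercive_solve[of "\<lambda>x. x" "1::real", OF bounded_linear_ident _ _ _ bl])
        (auto simp: inner_commute power2_norm_eq_inner)
    then obtain z where "\<forall>h. z \<bullet> h = A h \<bullet> y" by blast
    thus ?thesis by (metis inner_commute)
  qed
  hence "\<exists>f'. \<forall>x y. A x \<bullet> y = x \<bullet> f' y" by metis
  hence "\<forall>x y. A x \<bullet> y = x \<bullet> adjoint A y" unfolding adjoint_def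
    by (rule someI_ex[where P="\<lambda>f'. \<forall>x y. A x \<bullet> y = x \<bullet> f' y"])
  thus ?thesis by blast
qed

lemma adj_bl:
  fixes A :: "'a::{real_inner,complete_space} \<Rightarrow> 'b::real_inner"
  assumes A: "bounded_linear A"
  shows "bounded_linear (adjoint A)"
proof -
  interpret A: bounded_linear A by fact
  obtain K where K: "K > 0" "\<And>x. norm (A x) \<le> norm x * K" using A.pos_bounded by blast
  show ?thesis
  proof (rule bounded_linear_intro[where K=K])
    fix x y
    show "adjoint A (x + y) = adjoint A x + adjoint A y"
      by (metis (no_types) vector_eq_ldot adj[OF A] inner_add_right)
  next
    fix r x
    show "adjoint A (r *\<^sub>R x) = r *\<^sub>R adjoint A x"
      by (metis (no_types) vector_eq_ldot adj[OF A] inner_scaleR_right)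
  next
    fix y
    have "(norm (adjoint A y))\<^sup>2 = A (adjoint A y) \<bullet> y"
      by (simp add: adj[OF A] power2_norm_eq_inner)
    also have "\<dots> \<le> norm (A (adjoint A y)) * norm y" by (rule norm_cauchy_schwarz)
    also have "\<dots> \<le> norm (adjoint A y) * K * norm y" using K(2) by (simp add: mult_right_mono)
    finally have "norm (adjoint A y) * norm (adjoint A y) \<le> norm (adjoint A y) * (K * norm y)"
      by (simp add: power2_eq_square algebra_simps)
    thus "norm (adjoint A y) \<le> norm y * K"
      by (cases "norm (adjoint A y) = 0") (auto simp: mult.commute K(1) less_imp_le)
  qed
qed

lemma approx_eig:
  fixes T :: "'b::{real_inner,complete_space} \<Rightarrow> 'b"
  assumes T: "bounded_linear T" and sym: "\<And>x y. T x \<bullet> y = x \<bullet> T y"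
    and lam: "lam \<in> op_spectrum T" and e: "e > 0"
  shows "\<exists>v. norm v = 1 \<and> norm (T v - lam *\<^sub>R v) < e"
proof (rule ccontr)
  assume na: "\<not> ?thesis"
  interpret T: bounded_linear T by fact
  define L where "L x = lam *\<^sub>R x - T x" for x
  have Lbl: "bounded_linear L" unfolding L_def
    by (intro bounded_linear_sub bounded_linear_scaleR_right bounded_linear_ident T)
  interpret L: bounded_linear L by fact
  have Lsym: "L x \<bullet> y = x \<bullet> L y" for x y
    unfolding L_def by (simp add: inner_diff_left inner_diff_right sym)
  have below: "e * norm x \<le> norm (L x)" for x
  proof (cases "x = 0")
    case True thus ?thesis by simp
  next
    case False
    define v where "v = scaleR (1 / norm x) x"
    have nv: "norm v = 1" using False unfolding v_def by simp
    hence "e \<le> norm (T v - lam *\<^sub>R v)" using na by force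
    also have "T v - lam *\<^sub>R v = - scaleR (1 / norm x) (L x)"
      unfolding v_def L_def by (simp add: T.scaleR algebra_simps)
    finally have "e \<le> norm (L x) / norm x" by simp
    thus ?thesis using False by (simp add: field_simps)
  qed
  have S2bl: "bounded_linear (\<lambda>x. L (L x))" using bounded_linear_compose[OF Lbl Lbl] .
  have "surj (\<lambda>x. L (L x))"
  proof (rule coercive_surj[OF S2bl, where c="e\<^sup>2"])
    show "L (L x) \<bullet> y = x \<bullet> L (L y)" for x y by (simp add: Lsym)
    show "0 < e\<^sup>2" using e by simp
    show "e\<^sup>2 * (norm x)\<^sup>2 \<le> L (L x) \<bullet> x" for x
    proof -
      have "L (L x) \<bullet> x = (norm (L x))\<^sup>2" using Lsym[of "L x" x] by (simp add: power2_norm_eq_inner)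
      moreover have "e * norm x \<le> norm (L x)" by (rule below)
      hence "(e * norm x)\<^sup>2 \<le> (norm (L x))\<^sup>2" using e by (intro power_mono) auto
      ultimately show ?thesis by (simp add: power_mult_distrib)
    qed
  qed
  hence surjL: "surj L" unfolding surj_def by (metis (no_types))
  have injL: "inj L"
  proof (rule injI)
    fix x y assume "L x = L y"
    hence "L (x - y) = 0" by (simp add: L.diff)
    hence "e * norm (x - y) \<le> 0" using below[of "x - y"] by simp
    thus "x = y" using e by (simp add: mult_le_0_iff)
  qed
  define Si where "Si = inv L"
  have SiL: "Si (L x) = x" for x unfolding Si_def using injL by simp
  have LSi: "L (Si x) = x" for x unfolding Si_def using surjL by (simp add: surj_f_inv_f)
  have "bounded_linear Si"
  proof (rule bounded_linear_intro[where K="1/e"])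
    fix x y
    show "Si (x + y) = Si x + Si y"
      by (metis (no_types) SiL LSi L.add)
  next
    fix r x
    show "Si (r *\<^sub>R x) = r *\<^sub>R Si x" by (metis (no_types) SiL LSi L.scaleR)
  next
    fix x
    have "e * norm (Si x) \<le> norm x" using below[of "Si x"] LSi by simp
    thus "norm (Si x) \<le> norm x * (1 / e)" using e by (simp add: field_simps)
  qed
  moreover have "\<forall>x. Si (lam *\<^sub>R x - T x) = x" using SiL unfolding L_def by simp
  moreover have "\<forall>x. lam *\<^sub>R Si x - T (Si x) = x" using LSi unfolding L_def by simp
  ultimately show False using lam unfolding op_spectrum_def by blast
qed


theorem mainTheorem3:
  fixes A :: "'a::{real_inner,complete_space} \<Rightarrow> 'b::{real_inner,complete_space}"
    and xdag xstar :: 'a and y :: 'b and lam delta :: real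
  assumes "bounded_linear A"
    and "lam > 0"
    and "lam \<in> op_spectrum (A \<circ> adjoint A)"
    and "delta = lam"
  shows "\<exists>ydelta. norm (ydelta - y) = delta \<and>
           (\<forall>alpha>0. norm (xhat A alpha xdag xstar y ydelta - xdag) ^ 2
                        \<ge> delta / (2 * (alpha / delta + 3 / 2) ^ 2))"
proof -
  note A = assms(1)
  have lam: "lam > 0" by fact
  interpret A: bounded_linear A by fact
  define Aa where "Aa = adjoint A"
  have adjA: "A x \<bullet> y = x \<bullet> Aa y" for x y unfolding Aa_def by (rule adj[OF A])
  have Aabl: "bounded_linear Aa" unfolding Aa_def by (rule adj_bl[OF A])
  interpret Aa: bounded_linear Aa by fact
  define T where "T = A \<circ> Aa"
  have Tbl: "bounded_linear T" unfolding T_def o_def by (rule bounded_linear_compose[OF A Aabl])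
  interpret T: bounded_linear T by fact
  have Tsym: "T x \<bullet> y = x \<bullet> T y" for x y
    unfolding T_def o_def by (metis adjA inner_commute)
  obtain K where K: "K > 0" "\<And>x. norm (A x) \<le> norm x * K" using A.pos_bounded by blast
  define e where "e = min (lam / 10) (lam * sqrt lam / (4 * K))"
  have e0: "e > 0" unfolding e_def using lam K by simp
  have e1: "e \<le> lam / 10" unfolding e_def by simp
  have "e \<le> lam * sqrt lam / (4 * K)" unfolding e_def by simp
  hence e2: "K * e \<le> lam * sqrt lam / 4" using K(1) by (simp add: field_simps)
  obtain v where v: "norm v = 1" "norm (T v - lam *\<^sub>R v) < e"
    using approx_eig[OF Tbl Tsym _ e0] assms(3) unfolding T_def Aa_def by blast
  define d where "d = xstar - xdag"
  obtain w where w: "norm w = 1" "norm (T w - lam *\<^sub>R w) < e" "d \<bullet> Aa w \<ge> 0"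
  proof (cases "d \<bullet> Aa v \<ge> 0")
    case True thus ?thesis using that v by blast
  next
    case False
    have "T (- v) - lam *\<^sub>R (- v) = - (T v - lam *\<^sub>R v)" by (simp add: T.neg algebra_simps)
    hence "norm (T (- v) - lam *\<^sub>R (- v)) = norm (T v - lam *\<^sub>R v)" by (simp only: norm_minus_cancel)
    moreover have "d \<bullet> Aa (- v) \<ge> 0" using False by (simp add: Aa.neg)
    ultimately show ?thesis using that[of "- v"] v by simp
  qed
  define r where "r = T w - lam *\<^sub>R w"
  have nr: "norm r < e" using w unfolding r_def by simp
  define s where "s = norm (Aa w)"
  have s2: "s\<^sup>2 = lam + r \<bullet> w"
  proof -
    have "s\<^sup>2 = T w \<bullet> w" unfolding s_def T_def o_def by (simp add: adjA power2_norm_eq_inner)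
    also have "T w = lam *\<^sub>R w + r" unfolding r_def by simp
    finally show ?thesis using w(1) by (simp add: inner_add_left power2_norm_eq_inner[symmetric])
  qed
  have rw: "\<bar>r \<bullet> w\<bar> \<le> e" using Cauchy_Schwarz_ineq2[of r w] w(1) nr by simp
  have s2lo: "s\<^sup>2 \<ge> lam - e" and s2hi: "s\<^sup>2 \<le> lam + e" using s2 rw by auto
  have s0: "s \<ge> 0" unfolding s_def by simp
  have slo: "s \<ge> sqrt lam / 2"
  proof -
    have "(sqrt lam / 2)\<^sup>2 = lam / 4" using lam by (simp add: power_divide)
    also have "\<dots> \<le> s\<^sup>2" using s2lo e1 lam by linarith
    finally show ?thesis using s0 by (rule power2_le_imp_le)
  qed
  have Ke: "K * e \<le> lam * s / 2"
  proof -
    have "lam * sqrt lam / 4 \<le> lam * s / 2" using slo lam by (simp add: field_simps)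
    thus ?thesis using e2 by linarith
  qed
  show ?thesis
  proof (intro exI conjI allI impI)
    show "norm ((y + lam *\<^sub>R w) - y) = delta" using w(1) lam assms(4) by simp
    fix alpha :: real assume al: "alpha > 0"
    define F where "F x = alpha *\<^sub>R x + Aa (A x)" for x
    have Fbl: "bounded_linear F" unfolding F_def
      by (intro bounded_linear_add bounded_linear_scaleR_right bounded_linear_ident
          bounded_linear_compose[OF Aabl A])
    have Fsurj: "surj F"
    proof (rule coercive_surj[OF Fbl, where c=alpha])
      show "F x \<bullet> y = x \<bullet> F y" for x y
      proof -
        have "Aa (A x) \<bullet> y = A y \<bullet> A x" using adjA[of y "A x"] by (simp add: inner_commute)
        moreover have "x \<bullet> Aa (A y) = A y \<bullet> A x" using adjA[of x "A y"] by (simp add: inner_commute)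
        ultimately show ?thesis unfolding F_def by (simp add: inner_add_left inner_add_right inner_commute)
      qed
      show "0 < alpha" by fact
      show "alpha * (norm x)\<^sup>2 \<le> F x \<bullet> x" for x
      proof -
        have "Aa (A x) \<bullet> x = A x \<bullet> A x" using adjA[of x "A x"] by (simp add: inner_commute)
        thus ?thesis unfolding F_def by (simp add: inner_add_left power2_norm_eq_inner)
      qed
    qed
    define b where "b = alpha *\<^sub>R d + Aa (lam *\<^sub>R w)"
    define u where "u = inv F b"
    have Fu: "F u = b" unfolding u_def using Fsurj by (simp add: surj_f_inv_f)
    have xh: "xhat A alpha xdag xstar y (y + lam *\<^sub>R w) - xdag = u"
      unfolding xhat_def u_def b_def F_def d_def Aa_def by simp
    define N where "N = norm u"
    have N0: "N \<ge> 0" unfolding N_def by simp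
    have lhs: "F u \<bullet> Aa w = (alpha + lam) * (A u \<bullet> w) + r \<bullet> A u"
    proof -
      have "F u \<bullet> Aa w = alpha * (u \<bullet> Aa w) + Aa (A u) \<bullet> Aa w"
        unfolding F_def by (simp add: inner_add_left)
      also have "Aa (A u) \<bullet> Aa w = T w \<bullet> A u"
        unfolding T_def o_def by (metis adjA inner_commute)
      also have "T w = lam *\<^sub>R w + r" unfolding r_def by simp
      finally show ?thesis by (simp add: adjA[symmetric] inner_add_left algebra_simps inner_commute)
    qed
    have rhs: "b \<bullet> Aa w = alpha * (d \<bullet> Aa w) + lam * s\<^sup>2"
      unfolding b_def s_def by (simp add: inner_add_left Aa.scaleR power2_norm_eq_inner)
    have i1: "A u \<bullet> w \<le> N * s" unfolding N_def s_def using norm_cauchy_schwarz[of u "Aa w"] by (simp add: adjA)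
    have i2: "r \<bullet> A u \<le> e * (K * N)"
    proof -
      have "r \<bullet> A u \<le> norm r * norm (A u)" by (rule norm_cauchy_schwarz)
      also have "\<dots> \<le> e * (K * N)" using nr K(2)[of u] unfolding N_def
        by (intro mult_mono) (auto simp: mult.commute less_imp_le[OF e0])
      finally show ?thesis .
    qed
    have q1: "alpha * (d \<bullet> Aa w) \<ge> 0" using al w(3) by simp
    have q2: "lam * (lam - e) \<le> lam * s\<^sup>2" using s2lo lam by (simp add: mult_left_mono)
    have "lam * (lam - e) \<le> (alpha + lam) * (A u \<bullet> w) + r \<bullet> A u"
      using lhs[unfolded Fu] rhs q1 q2 by linarith
    also have "\<dots> \<le> (alpha + lam) * (N * s) + e * (K * N)"
    proof -
      have "(alpha + lam) * (A u \<bullet> w) \<le> (alpha + lam) * (N * s)"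
        using i1 al lam by (simp add: mult_left_mono)
      thus ?thesis using i2 by linarith
    qed
    also have "\<dots> \<le> (alpha + lam) * (N * s) + N * (lam * s / 2)"
    proof -
      have "N * (K * e) \<le> N * (lam * s / 2)" using Ke N0 by (rule mult_left_mono)
      thus ?thesis by (simp add: algebra_simps)
    qed
    finally have key: "lam * (lam - e) \<le> N * s * (alpha + 3 * lam / 2)" by (simp add: algebra_simps)
    define P where "P = alpha + 3 * lam / 2"
    have P0: "P > 0" unfolding P_def using al lam by simp
    have "lam * (9 / 10 * lam) \<le> lam * (lam - e)" using e1 lam by (simp add: mult_left_mono)
    hence "9 / 10 * lam\<^sup>2 \<le> N * s * P" using key unfolding P_def by (simp add: power2_eq_square)
    hence "(9 / 10 * lam\<^sup>2)\<^sup>2 \<le> (N * s * P)\<^sup>2" using lam by (intro power_mono) auto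
    also have "(N * s * P)\<^sup>2 = N\<^sup>2 * P\<^sup>2 * s\<^sup>2" by (simp add: power_mult_distrib)
    also have "\<dots> \<le> N\<^sup>2 * P\<^sup>2 * (11 / 10 * lam)" using s2hi e1 by (intro mult_left_mono) auto
    finally have "81 / 100 * lam ^ 4 \<le> N\<^sup>2 * P\<^sup>2 * (11 / 10 * lam)" by (simp add: power2_eq_square power4_eq_xxxx)
    hence "81 / 110 * lam ^ 3 \<le> N\<^sup>2 * P\<^sup>2" using lam
      by (simp add: power2_eq_square power3_eq_cube power4_eq_xxxx field_simps)
    moreover have "lam ^ 3 / 2 \<le> 81 / 110 * lam ^ 3" using lam by simp
    ultimately have "lam ^ 3 / 2 \<le> N\<^sup>2 * P\<^sup>2" by linarith
    hence "lam ^ 3 / (2 * P\<^sup>2) \<le> N\<^sup>2" using P0 by (simp add: field_simps)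
    moreover have "delta / (2 * (alpha / delta + 3 / 2)\<^sup>2) = lam ^ 3 / (2 * P\<^sup>2)"
      unfolding P_def assms(4) using lam by (simp add: field_simps power2_eq_square power3_eq_cube)
    ultimately show "delta / (2 * (alpha / delta + 3 / 2) ^ 2)
        \<le> norm (xhat A alpha xdag xstar y (y + lam *\<^sub>R w) - xdag) ^ 2"
      using xh unfolding N_def by simp
  qed
qed

end
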